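(* The complexity measure $M$ is downward non-increasing: for every affine subspace $U\subseteq\mathbb{F}_2^n$, every function $f:U\to\mathbb{F}_2$, and every affine subspace $W\subseteq U$, we have $M(f|_W)\le M(f)$, where $f|_W$ denotes the restriction of $f$ to $W$.
   Context: For an affine subspace $V\subseteq\mathbb{F}_2^n$ with $t=\dim V$ and a function $g:V\to\mathbb{F}_2$, choose an affine map $L:\mathbb{F}_2^t\to\mathbb{F}_2^n$ with $L(\mathbb{F}_2^t)=V$ (so $L$ is a bijection onto $V$), and define $G:(\mathbb{F}_2^t)^4\to\mathbb{F}_2$ by $G(x_1,x_2,x_3,x_4)=g(L(x_1+x_2+x_3+x_4))$. Then $M(g)$ is defined as $\mathrm{CC}_4(G)$; this does not depend on the choice of $L$. Here $\mathrm{CC}_4(G)$ is the deterministic number-in-hand multiparty communication complexity of $G$ in the blackboard model: $4$ players, player $P_i$ holds $x_i$, every message is written on a blackboard visible to all, and $\mathrm{CC}_4(G)$ is the least number of bits communicated in the worst case by a deterministic protocol computing $G$ correctly on all inputs. *)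

theory Defs
  imports Main
begin

section \<open>The vector space F_2^n, represented as boolean lists of length n\<close>

definition vec :: "nat \<Rightarrow> bool list set" where
  "vec n = {x. length x = n}"

definition vzero :: "nat \<Rightarrow> bool list" where
  "vzero n = replicate n False"

definition vadd :: "bool list \<Rightarrow> bool list \<Rightarrow> bool list" where
  "vadd x y = map2 (\<noteq>) x y"

text \<open>A linear subspace of F_2^n: contains 0 and is closed under addition
  (over F_2 this is exactly closure under linear combinations).
  An affine subspace is a translate of a linear subspace.\<close>
definition lin_subspace :: "nat \<Rightarrow> bool list set \<Rightarrow> bool" where
  "lin_subspace n S \<longleftrightarrow> S \<subseteq> vec n \<and> vzero n \<in> S \<and> (\<forall>x\<in>S. \<forall>y\<in>S. vadd x y \<in> S)"

definition affine_subspace :: "nat \<Rightarrow> bool list set \<Rightarrow> bool" where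
  "affine_subspace n V \<longleftrightarrow> (\<exists>a\<in>vec n. \<exists>S. lin_subspace n S \<and> V = vadd a ` S)"

text \<open>Affine maps F_2^t -> F_2^n: L(x) - L(0) is additive (= linear over F_2).\<close>
definition affine_map :: "nat \<Rightarrow> nat \<Rightarrow> (bool list \<Rightarrow> bool list) \<Rightarrow> bool" where
  "affine_map t n L \<longleftrightarrow> (\<forall>x\<in>vec t. L x \<in> vec n) \<and>
     (\<forall>x\<in>vec t. \<forall>y\<in>vec t. L (vadd x y) = vadd (vadd (L x) (L y)) (L (vzero t)))"

text \<open>A protocol tree: at an internal node, player i (0 <= i < 4) writes one bit on the
  blackboard, computed from its own input (the history is encoded by the position in the tree).\<close>
datatype 'a proto = Leaf bool | Node nat "'a \<Rightarrow> bool" "'a proto" "'a proto"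

fun proto_wf :: "'a proto \<Rightarrow> bool" where
  "proto_wf (Leaf b) = True"
| "proto_wf (Node i f l r) = (i < 4 \<and> proto_wf l \<and> proto_wf r)"

fun proto_depth :: "'a proto \<Rightarrow> nat" where
  "proto_depth (Leaf b) = 0"
| "proto_depth (Node i f l r) = Suc (max (proto_depth l) (proto_depth r))"

fun proto_run :: "'a proto \<Rightarrow> 'a list \<Rightarrow> bool" where
  "proto_run (Leaf b) xs = b"
| "proto_run (Node i f l r) xs = (if f (xs ! i) then proto_run r xs else proto_run l xs)"

definition CC4 :: "'a set \<Rightarrow> ('a \<Rightarrow> 'a \<Rightarrow> 'a \<Rightarrow> 'a \<Rightarrow> bool) \<Rightarrow> nat" where
  "CC4 D G = (LEAST d. \<exists>P. proto_wf P \<and> proto_depth P = d \<and>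
      (\<forall>x1\<in>D. \<forall>x2\<in>D. \<forall>x3\<in>D. \<forall>x4\<in>D. proto_run P [x1, x2, x3, x4] = G x1 x2 x3 x4))"

text \<open>For an affine subspace V of F_2^n and g : V -> F_2 (given as a total function whose
  values outside V are irrelevant), choose t and an affine bijection L : F_2^t -> V and take
  CC_4 of G(x1,x2,x3,x4) = g(L(x1+x2+x3+x4)). (The choice does not matter.)\<close>
definition M :: "nat \<Rightarrow> bool list set \<Rightarrow> (bool list \<Rightarrow> bool) \<Rightarrow> nat" where
  "M n V g = (let (t, L) = (SOME (t, L). affine_map t n L \<and> bij_betw L (vec t) V)
              in CC4 (vec t) (\<lambda>x1 x2 x3 x4. g (L (vadd (vadd (vadd x1 x2) x3) x4))))"

end

theory Submission
  imports Defs
begin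

lemma length_vadd[simp]: "length (vadd x y) = min (length x) (length y)"
  by (simp add: vadd_def)

lemma nth_vadd[simp]: "i < length x \<Longrightarrow> i < length y \<Longrightarrow> vadd x y ! i = (x!i \<noteq> y!i)"
  by (simp add: vadd_def)

lemma vadd_Cons[simp]: "vadd (a#x) (b#y) = (a \<noteq> b) # vadd x y"
  by (simp add: vadd_def)

lemma vadd_Nil[simp]: "vadd [] y = []" "vadd x [] = []"
  by (auto simp add: vadd_def)

lemma length_vzero[simp]: "length (vzero n) = n" by (simp add: vzero_def)
lemma nth_vzero[simp]: "i < n \<Longrightarrow> vzero n ! i = False" by (simp add: vzero_def)
lemma vzero_Suc: "vzero (Suc n) = False # vzero n" by (simp add: vzero_def)

lemma vec_len: "x \<in> vec n \<longleftrightarrow> length x = n" by (simp add: vec_def)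

fun rv :: "nat \<Rightarrow> nat \<Rightarrow> (bool list \<Rightarrow> bool list proto) \<Rightarrow> bool list proto" where
  "rv i 0 k = k []"
| "rv i (Suc m) k = Node i (\<lambda>x. x ! m) (rv i m (\<lambda>p. k (p @ [False]))) (rv i m (\<lambda>p. k (p @ [True])))"

lemma rv_run: "m \<le> length (xs ! i) \<Longrightarrow> proto_run (rv i m k) xs = proto_run (k (take m (xs!i))) xs"
proof (induction m arbitrary: k)
  case 0 then show ?case by simp
next
  case (Suc m)
  have t: "take (Suc m) (xs!i) = take m (xs!i) @ [xs!i!m]"
    using Suc.prems by (simp add: take_Suc_conv_app_nth)
  show ?case using Suc by (simp add: t)
qed

lemma rv_wf: "i < 4 \<Longrightarrow> (\<forall>p. proto_wf (k p)) \<Longrightarrow> proto_wf (rv i m k)"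
  by (induction m arbitrary: k) auto

lemma proto_exists:
  "\<exists>d P. proto_wf P \<and> proto_depth P = d \<and>
      (\<forall>x1\<in>vec t. \<forall>x2\<in>vec t. \<forall>x3\<in>vec t. \<forall>x4\<in>vec t. proto_run P [x1, x2, x3, x4] = G x1 x2 x3 x4)"
proof -
  define P where "P = rv 0 t (\<lambda>a. rv 1 t (\<lambda>b. rv 2 t (\<lambda>c. rv 3 t (\<lambda>d. Leaf (G a b c d)))))"
  have "proto_wf P" unfolding P_def by (intro rv_wf allI) auto
  moreover have "\<forall>x1\<in>vec t. \<forall>x2\<in>vec t. \<forall>x3\<in>vec t. \<forall>x4\<in>vec t. proto_run P [x1, x2, x3, x4] = G x1 x2 x3 x4"
    unfolding P_def by (simp add: rv_run vec_len)
  ultimately show ?thesis by blast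
qed

fun tr :: "(nat \<Rightarrow> 'a \<Rightarrow> 'b) \<Rightarrow> 'b proto \<Rightarrow> 'a proto" where
  "tr \<phi> (Leaf b) = Leaf b"
| "tr \<phi> (Node i g l r) = Node i (\<lambda>x. g (\<phi> i x)) (tr \<phi> l) (tr \<phi> r)"

lemma tr_wf: "proto_wf P \<Longrightarrow> proto_wf (tr \<phi> P)" by (induction P) auto
lemma tr_depth: "proto_depth (tr \<phi> P) = proto_depth P" by (induction P) auto

lemma nth4: "i < 4 \<Longrightarrow> [\<phi> 0 a, \<phi> 1 b, \<phi> 2 c, \<phi> 3 d] ! i = \<phi> i ([a,b,c,d] ! i)"
proof -
  assume "i < 4"
  then have "i = 0 \<or> i = 1 \<or> i = 2 \<or> i = 3" by arith
  then show ?thesis by (auto simp: numeral_eq_Suc)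
qed

lemma tr_run: "proto_wf P \<Longrightarrow> proto_run (tr \<phi> P) [a,b,c,d] = proto_run P [\<phi> 0 a, \<phi> 1 b, \<phi> 2 c, \<phi> 3 d]"
proof (induction P)
  case (Leaf x) then show ?case by simp
next
  case (Node i g l r)
  then have "[\<phi> 0 a, \<phi> 1 b, \<phi> 2 c, \<phi> 3 d] ! i = \<phi> i ([a,b,c,d] ! i)"
    by (intro nth4) simp
  then show ?case using Node by (simp del: One_nat_def)
qed

definition closed3 :: "bool list set \<Rightarrow> bool" where
  "closed3 V \<longleftrightarrow> (\<forall>x\<in>V. \<forall>y\<in>V. \<forall>z\<in>V. vadd (vadd x y) z \<in> V)"

lemma vec_Suc_cases: "z \<in> vec (Suc n) \<Longrightarrow> \<exists>b y. z = b # y \<and> y \<in> vec n"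
  by (cases z) (auto simp: vec_len)

lemma ex_affine_bij:
  "V \<noteq> {} \<Longrightarrow> V \<subseteq> vec n \<Longrightarrow> closed3 V \<Longrightarrow> \<exists>t L. affine_map t n L \<and> bij_betw L (vec t) V"
proof (induction n arbitrary: V)
  case 0
  then have V: "V = {[]}" by (auto simp: vec_len)
  have "affine_map 0 0 id" by (auto simp: affine_map_def vec_len)
  moreover have "bij_betw id (vec 0) V" using V by (auto simp: vec_len bij_betw_def)
  ultimately show ?case by blast
next
  case (Suc n)
  define V0 where "V0 = {y. False # y \<in> V}"
  define V1 where "V1 = {y. True # y \<in> V}"
  have V0v: "V0 \<subseteq> vec n" using Suc.prems(2) by (auto simp: V0_def vec_len)
  have V1v: "V1 \<subseteq> vec n" using Suc.prems(2) by (auto simp: V1_def vec_len)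
  have c0: "closed3 V0" using Suc.prems(3) unfolding closed3_def V0_def
  proof (intro ballI)
    fix x y z assume "x \<in> {y. False # y \<in> V}" "y \<in> {y. False # y \<in> V}" "z \<in> {y. False # y \<in> V}"
    then have "vadd (vadd (False # x) (False # y)) (False # z) \<in> V" using Suc.prems(3) unfolding closed3_def by blast
    then show "vadd (vadd x y) z \<in> {y. False # y \<in> V}" by simp
  qed
  have c1: "closed3 V1" using Suc.prems(3) unfolding closed3_def V1_def
  proof (intro ballI)
    fix x y z assume "x \<in> {y. True # y \<in> V}" "y \<in> {y. True # y \<in> V}" "z \<in> {y. True # y \<in> V}"
    then have "vadd (vadd (True # x) (True # y)) (True # z) \<in> V" using Suc.prems(3) unfolding closed3_def by blast
    then show "vadd (vadd x y) z \<in> {y. True # y \<in> V}" by simp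
  qed
  have Vsplit: "z \<in> V \<longleftrightarrow> (\<exists>y. (z = False # y \<and> y \<in> V0) \<or> (z = True # y \<and> y \<in> V1))" for z
  proof
    assume "z \<in> V"
    then obtain b y where "z = b # y" using Suc.prems(2) vec_Suc_cases[of z n] by blast
    then show "\<exists>y. (z = False # y \<and> y \<in> V0) \<or> (z = True # y \<and> y \<in> V1)"
      using \<open>z \<in> V\<close> by (cases b) (auto simp: V0_def V1_def)
  qed (auto simp: V0_def V1_def)
  show ?case
  proof (cases "V1 = {}")
    case True
    then have "V0 \<noteq> {}" using Suc.prems(1) Vsplit by blast
    from Suc.IH[OF this V0v c0] obtain t L0 where L0: "affine_map t n L0" "bij_betw L0 (vec t) V0" by blast
    define L where "L = (\<lambda>x. False # L0 x)"
    have "affine_map t (Suc n) L" using L0(1) by (auto simp: affine_map_def L_def vec_len)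
    moreover have "bij_betw L (vec t) V"
    proof -
      have "inj_on L (vec t)" using L0(2) by (auto simp: L_def bij_betw_def inj_on_def)
      moreover have "L ` vec t = V"
        using L0(2) True Vsplit by (auto simp: L_def bij_betw_def)
      ultimately show ?thesis by (simp add: bij_betw_def)
    qed
    ultimately show ?thesis by blast
  next
    case F1: False
    show ?thesis
    proof (cases "V0 = {}")
      case True
      from Suc.IH[OF F1 V1v c1] obtain t L0 where L0: "affine_map t n L0" "bij_betw L0 (vec t) V1" by blast
      define L where "L = (\<lambda>x. True # L0 x)"
      have "affine_map t (Suc n) L" using L0(1) by (auto simp: affine_map_def L_def vec_len)
      moreover have "bij_betw L (vec t) V"
      proof -
        have "inj_on L (vec t)" using L0(2) by (auto simp: L_def bij_betw_def inj_on_def)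
        moreover have "L ` vec t = V"
          using L0(2) True Vsplit by (auto simp: L_def bij_betw_def)
        ultimately show ?thesis by (simp add: bij_betw_def)
      qed
      ultimately show ?thesis by blast
    next
      case F0: False
      from Suc.IH[OF F0 V0v c0] obtain t L0 where L0: "affine_map t n L0" "bij_betw L0 (vec t) V0" by blast
      obtain u where u: "u \<in> V0" using F0 by blast
      obtain w where w: "w \<in> V1" using F1 by blast
      have ul: "length u = n" and wl: "length w = n" using u w V0v V1v by (auto simp: vec_len)
      define d where "d = vadd u w"
      have dl: "length d = n" using ul wl by (simp add: d_def)
      have L0v: "x \<in> vec t \<Longrightarrow> length (L0 x) = n" for x using L0(1) by (auto simp: affine_map_def vec_len)
      define L where "L = (\<lambda>z. hd z # (if hd z then vadd d (L0 (tl z)) else L0 (tl z)))"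
      have Lc: "L (b # x) = b # (if b then vadd d (L0 x) else L0 x)" for b x by (simp add: L_def)
      have shift1: "y \<in> V0 \<Longrightarrow> vadd d y \<in> V1" for y
      proof -
        assume y: "y \<in> V0"
        have "vadd (vadd (True # w) (False # u)) (False # y) \<in> V"
          using Suc.prems(3) u w y unfolding closed3_def V0_def V1_def by blast
        moreover have "vadd (vadd (True # w) (False # u)) (False # y) = True # vadd d y"
          using y V0v ul wl by (auto simp: d_def vec_len intro!: nth_equalityI)
        ultimately show ?thesis by (simp add: V1_def)
      qed
      have shift0: "y \<in> V1 \<Longrightarrow> vadd d y \<in> V0" for y
      proof -
        assume y: "y \<in> V1"
        have "vadd (vadd (True # w) (False # u)) (True # y) \<in> V"
          using Suc.prems(3) u w y unfolding closed3_def V0_def V1_def by blast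
        moreover have "vadd (vadd (True # w) (False # u)) (True # y) = False # vadd d y"
          using y V1v ul wl by (auto simp: d_def vec_len intro!: nth_equalityI)
        ultimately show ?thesis by (simp add: V0_def)
      qed
      have dd: "length y = n \<Longrightarrow> vadd d (vadd d y) = y" for y
        using dl by (auto intro!: nth_equalityI)
      have "affine_map (Suc t) (Suc n) L"
        unfolding affine_map_def
      proof (intro conjI ballI)
        fix x assume "x \<in> vec (Suc t)"
        then obtain b y where "x = b # y" "y \<in> vec t" using vec_Suc_cases by blast
        then show "L x \<in> vec (Suc n)" using L0v dl by (auto simp: Lc vec_len)
      next
        fix x y assume "x \<in> vec (Suc t)" "y \<in> vec (Suc t)"
        then obtain a x' b y' where xy: "x = a # x'" "y = b # y'" "x' \<in> vec t" "y' \<in> vec t"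
          using vec_Suc_cases by metis
        have z: "vzero t \<in> vec t" by (simp add: vec_len)
        have e: "L0 (vadd x' y') = vadd (vadd (L0 x') (L0 y')) (L0 (vzero t))"
          using L0(1) xy by (simp add: affine_map_def)
        have lx: "length (L0 x') = n" "length (L0 y') = n" "length (L0 (vzero t)) = n"
          using L0v xy z by auto
        show "L (vadd x y) = vadd (vadd (L x) (L y)) (L (vzero (Suc t)))"
          using lx dl
          by (cases a; cases b; simp add: xy Lc vzero_Suc e; intro nth_equalityI; simp; blast)
      qed
      moreover have "bij_betw L (vec (Suc t)) V"
      proof -
        have "inj_on L (vec (Suc t))"
        proof
          fix x y assume "x \<in> vec (Suc t)" "y \<in> vec (Suc t)" and eq: "L x = L y"
          then obtain a x' b y' where xy: "x = a # x'" "y = b # y'" "x' \<in> vec t" "y' \<in> vec t"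
            using vec_Suc_cases by metis
          have ab: "a = b" using eq by (simp add: xy Lc)
          have "L0 x' = L0 y'"
          proof (cases a)
            case True
            then have "vadd d (L0 x') = vadd d (L0 y')" using eq ab by (simp add: xy Lc)
            then have "vadd d (vadd d (L0 x')) = vadd d (vadd d (L0 y'))" by simp
            then show ?thesis using dd L0v xy by simp
          next
            case False then show ?thesis using eq ab by (simp add: xy Lc)
          qed
          then have "x' = y'" using L0(2) xy by (auto simp: bij_betw_def inj_on_def)
          then show "x = y" using ab xy by simp
        qed
        moreover have "L ` vec (Suc t) = V"
        proof
          show "L ` vec (Suc t) \<subseteq> V"
          proof
            fix z assume "z \<in> L ` vec (Suc t)"
            then obtain x where x: "x \<in> vec (Suc t)" "z = L x" by blast
            then obtain b y where "x = b # y" "y \<in> vec t" using vec_Suc_cases by blast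
            moreover have "L0 y \<in> V0" using L0(2) \<open>y \<in> vec t\<close> by (auto simp: bij_betw_def)
            ultimately show "z \<in> V" using x shift1 by (cases b) (auto simp: Lc V0_def V1_def)
          qed
        next
          show "V \<subseteq> L ` vec (Suc t)"
          proof
            fix z assume "z \<in> V"
            then obtain y where "(z = False # y \<and> y \<in> V0) \<or> (z = True # y \<and> y \<in> V1)" using Vsplit by blast
            then show "z \<in> L ` vec (Suc t)"
            proof
              assume h: "z = False # y \<and> y \<in> V0"
              then obtain x where "x \<in> vec t" "y = L0 x" using L0(2) by (auto simp: bij_betw_def)
              then have "z = L (False # x)" "False # x \<in> vec (Suc t)" using h by (auto simp: Lc vec_len)
              then show ?thesis by blast
            next
              assume h: "z = True # y \<and> y \<in> V1"
              then obtain x where x: "x \<in> vec t" "vadd d y = L0 x" using L0(2) shift0 by (force simp: bij_betw_def)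
              have "length y = n" using h V1v by (auto simp: vec_len)
              then have "y = vadd d (L0 x)" using x(2) dd by metis
              then have "z = L (True # x)" using h by (simp add: Lc)
              moreover have "True # x \<in> vec (Suc t)" using x by (auto simp: vec_len)
              ultimately show ?thesis by blast
            qed
          qed
        qed
        ultimately show ?thesis by (simp add: bij_betw_def)
      qed
      ultimately show ?thesis by blast
    qed
  qed
qed

lemma affine_subspace_props:
  assumes "affine_subspace n V"
  shows "V \<noteq> {}" "V \<subseteq> vec n" "closed3 V"
proof -
  obtain a S where a: "a \<in> vec n" "lin_subspace n S" "V = vadd a ` S"
    using assms by (auto simp: affine_subspace_def)
  have S: "S \<subseteq> vec n" "vzero n \<in> S" "\<And>x y. x \<in> S \<Longrightarrow> y \<in> S \<Longrightarrow> vadd x y \<in> S"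
    using a(2) by (auto simp: lin_subspace_def)
  show "V \<noteq> {}" using a S by auto
  show "V \<subseteq> vec n" using a S by (auto simp: vec_len)
  show "closed3 V" unfolding closed3_def
  proof (intro ballI)
    fix x y z assume "x \<in> V" "y \<in> V" "z \<in> V"
    then obtain p q r where pqr: "p \<in> S" "q \<in> S" "r \<in> S" "x = vadd a p" "y = vadd a q" "z = vadd a r"
      using a by auto
    have l: "length p = n" "length q = n" "length r = n" "length a = n" using pqr S a by (auto simp: vec_len)
    have "vadd (vadd x y) z = vadd a (vadd (vadd p q) r)"
      using l pqr by (auto intro!: nth_equalityI)
    moreover have "vadd (vadd p q) r \<in> S" using S pqr by blast
    ultimately show "vadd (vadd x y) z \<in> V" using a by auto
  qed
qed

lemma reduce:
  assumes LU: "affine_map tU n LU" "bij_betw LU (vec tU) U"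
    and LW: "affine_map tW n LW" "bij_betw LW (vec tW) W"
    and WU: "W \<subseteq> U"
  shows "CC4 (vec tW) (\<lambda>x1 x2 x3 x4. f (LW (vadd (vadd (vadd x1 x2) x3) x4)))
       \<le> CC4 (vec tU) (\<lambda>x1 x2 x3 x4. f (LU (vadd (vadd (vadd x1 x2) x3) x4)))"
proof -
  define A where "A = (\<lambda>x. the_inv_into (vec tU) LU (LW x))"
  have LWin: "x \<in> vec tW \<Longrightarrow> LW x \<in> U" for x using LW(2) WU by (auto simp: bij_betw_def)
  have Ain: "x \<in> vec tW \<Longrightarrow> A x \<in> vec tU" for x
    using LWin LU(2) by (simp add: A_def bij_betw_def the_inv_into_into)
  have LUA: "x \<in> vec tW \<Longrightarrow> LU (A x) = LW x" for x
    using LWin LU(2) by (simp add: A_def f_the_inv_into_f_bij_betw)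
  have injU: "inj_on LU (vec tU)" using LU(2) by (simp add: bij_betw_def)
  have LUv: "x \<in> vec tU \<Longrightarrow> length (LU x) = n" for x using LU(1) by (auto simp: affine_map_def vec_len)
  have LUa: "x \<in> vec tU \<Longrightarrow> y \<in> vec tU \<Longrightarrow> LU (vadd x y) = vadd (vadd (LU x) (LU y)) (LU (vzero tU))" for x y
    using LU(1) by (simp add: affine_map_def)
  have LWa: "x \<in> vec tW \<Longrightarrow> y \<in> vec tW \<Longrightarrow> LW (vadd x y) = vadd (vadd (LW x) (LW y)) (LW (vzero tW))" for x y
    using LW(1) by (simp add: affine_map_def)
  have vaddv: "x \<in> vec m \<Longrightarrow> y \<in> vec m \<Longrightarrow> vadd x y \<in> vec m" for x y m by (simp add: vec_len)
  have z0W: "vzero tW \<in> vec tW" and z0U: "vzero tU \<in> vec tU" by (simp_all add: vec_len)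
  have Aaff: "A (vadd x y) = vadd (vadd (A x) (A y)) (A (vzero tW))"
    if xy: "x \<in> vec tW" "y \<in> vec tW" for x y
  proof -
    define a where "a = A x" define b where "b = A y" define c where "c = A (vzero tW)"
    have abc: "a \<in> vec tU" "b \<in> vec tU" "c \<in> vec tU" using Ain xy z0W by (auto simp: a_def b_def c_def)
    have "LU (vadd (vadd a b) c) = vadd (vadd (vadd (vadd (LU a) (LU b)) (LU (vzero tU))) (LU c)) (LU (vzero tU))"
      using abc vaddv by (simp add: LUa)
    also have "\<dots> = vadd (vadd (LU a) (LU b)) (LU c)"
      using LUv abc z0U by (intro nth_equalityI) auto
    also have "\<dots> = LW (vadd x y)"
      using xy z0W by (simp add: LWa LUA a_def b_def c_def)
    also have "\<dots> = LU (A (vadd x y))" using xy vaddv by (simp add: LUA)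
    finally have "LU (vadd (vadd a b) c) = LU (A (vadd x y))" .
    moreover have "vadd (vadd a b) c \<in> vec tU" using abc vaddv by blast
    moreover have "A (vadd x y) \<in> vec tU" using xy vaddv Ain by blast
    ultimately show ?thesis using injU by (auto simp: inj_on_def a_def b_def c_def)
  qed
  define \<phi> where "\<phi> = (\<lambda>i x. if i = (0::nat) then vadd (A x) (A (vzero tW)) else A x)"
  have Asum: "A (vadd (vadd (vadd x1 x2) x3) x4) = vadd (vadd (vadd (\<phi> 0 x1) (\<phi> 1 x2)) (\<phi> 2 x3)) (\<phi> 3 x4)"
    if "x1 \<in> vec tW" "x2 \<in> vec tW" "x3 \<in> vec tW" "x4 \<in> vec tW" for x1 x2 x3 x4
  proof -
    have "A (vadd (vadd (vadd x1 x2) x3) x4) =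
      vadd (vadd (vadd (vadd (vadd (vadd (A x1) (A x2)) (A (vzero tW))) (A x3)) (A (vzero tW))) (A x4)) (A (vzero tW))"
      using that vaddv by (simp add: Aaff)
    also have "\<dots> = vadd (vadd (vadd (\<phi> 0 x1) (\<phi> 1 x2)) (\<phi> 2 x3)) (\<phi> 3 x4)"
    proof -
      have l: "length (A x1) = tU" "length (A x2) = tU" "length (A x3) = tU" "length (A x4) = tU"
        "length (A (vzero tW)) = tU" using Ain that z0W by (auto simp: vec_len)
      show ?thesis using l by (simp add: \<phi>_def) (intro nth_equalityI; simp; blast)
    qed
    finally show ?thesis .
  qed
  define GU where "GU = (\<lambda>x1 x2 x3 x4. f (LU (vadd (vadd (vadd x1 x2) x3) x4)))"
  define GW where "GW = (\<lambda>x1 x2 x3 x4. f (LW (vadd (vadd (vadd x1 x2) x3) x4)))"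
  define Q where "Q = (\<lambda>(D::bool list set) G d. \<exists>P. proto_wf P \<and> proto_depth P = d \<and>
      (\<forall>x1\<in>D. \<forall>x2\<in>D. \<forall>x3\<in>D. \<forall>x4\<in>D. proto_run P [x1, x2, x3, x4] = (G x1 x2 x3 x4::bool)))"
  have CCQ: "CC4 D G = (LEAST d. Q D G d)" for D :: "bool list set" and G by (simp add: CC4_def Q_def)
  have "\<exists>d. Q (vec tU) GU d" using proto_exists[of tU GU] by (simp add: Q_def)
  then have "Q (vec tU) GU (LEAST d. Q (vec tU) GU d)" by (rule LeastI_ex)
  then obtain P where P: "proto_wf P" "proto_depth P = (LEAST d. Q (vec tU) GU d)"
    "\<forall>x1\<in>vec tU. \<forall>x2\<in>vec tU. \<forall>x3\<in>vec tU. \<forall>x4\<in>vec tU. proto_run P [x1, x2, x3, x4] = GU x1 x2 x3 x4"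
    by (auto simp: Q_def)
  have phin: "x \<in> vec tW \<Longrightarrow> \<phi> i x \<in> vec tU" for i x using Ain z0W vaddv by (simp add: \<phi>_def)
  have "Q (vec tW) GW (proto_depth P)"
    unfolding Q_def
  proof (intro exI[of _ "tr \<phi> P"] conjI ballI)
    show "proto_wf (tr \<phi> P)" using P(1) by (rule tr_wf)
    show "proto_depth (tr \<phi> P) = proto_depth P" by (rule tr_depth)
    fix x1 x2 x3 x4 assume x: "x1 \<in> vec tW" "x2 \<in> vec tW" "x3 \<in> vec tW" "x4 \<in> vec tW"
    have "proto_run (tr \<phi> P) [x1, x2, x3, x4] = GU (\<phi> 0 x1) (\<phi> 1 x2) (\<phi> 2 x3) (\<phi> 3 x4)"
      using P x phin by (simp add: tr_run del: One_nat_def)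
    also have "\<dots> = f (LU (A (vadd (vadd (vadd x1 x2) x3) x4)))"
      using Asum[OF x] by (simp add: GU_def del: One_nat_def)
    also have "\<dots> = GW x1 x2 x3 x4" using x vaddv by (simp add: LUA GW_def)
    finally show "proto_run (tr \<phi> P) [x1, x2, x3, x4] = GW x1 x2 x3 x4" .
  qed
  then have "(LEAST d. Q (vec tW) GW d) \<le> proto_depth P" by (rule Least_le)
  then show ?thesis using P(2) by (simp add: CCQ GU_def GW_def)
qed

lemma M_unfold:
  assumes "affine_subspace n V"
  obtains t L where "affine_map t n L" "bij_betw L (vec t) V"
    "M n V g = CC4 (vec t) (\<lambda>x1 x2 x3 x4. g (L (vadd (vadd (vadd x1 x2) x3) x4)))"
proof -
  have "\<exists>t L. affine_map t n L \<and> bij_betw L (vec t) V"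
    using ex_affine_bij affine_subspace_props[OF assms] by blast
  then have ex: "\<exists>p. case p of (t, L) \<Rightarrow> affine_map t n L \<and> bij_betw L (vec t) V" by auto
  define p where "p = (SOME p. case p of (t, L) \<Rightarrow> affine_map t n L \<and> bij_betw L (vec t) V)"
  have "case p of (t, L) \<Rightarrow> affine_map t n L \<and> bij_betw L (vec t) V"
    unfolding p_def using someI_ex[OF ex] .
  moreover have "M n V g = (case p of (t, L) \<Rightarrow> CC4 (vec t) (\<lambda>x1 x2 x3 x4. g (L (vadd (vadd (vadd x1 x2) x3) x4))))"
    unfolding M_def p_def by simp
  ultimately show ?thesis using that by (cases p) auto
qed

theorem lemma3p3:
  fixes n :: nat and U W :: "bool list set" and f :: "bool list \<Rightarrow> bool"
  assumes "affine_subspace n U" and "affine_subspace n W" and "W \<subseteq> U"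
  shows "M n W f \<le> M n U f"
proof -
  obtain tU LU where U: "affine_map tU n LU" "bij_betw LU (vec tU) U"
    "M n U f = CC4 (vec tU) (\<lambda>x1 x2 x3 x4. f (LU (vadd (vadd (vadd x1 x2) x3) x4)))"
    using M_unfold[OF assms(1)] by blast
  obtain tW LW where W: "affine_map tW n LW" "bij_betw LW (vec tW) W"
    "M n W f = CC4 (vec tW) (\<lambda>x1 x2 x3 x4. f (LW (vadd (vadd (vadd x1 x2) x3) x4)))"
    using M_unfold[OF assms(2)] by blast
  show ?thesis using reduce[OF U(1,2) W(1,2) assms(3)] U(3) W(3) by simp
qed

end
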